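(* Let $X$ be a normed linear space, $F:X\rightrightarrows\mathbb{R}^p$, $(x,y)\in\mathrm{gph}F$, with $F$ Lipschitz around $x$ and $y\in\mathcal{PE}(F(x),P)$, and let $S$ be a nonempty compact subset of $X\times\mathbb{R}^p$. Assume $$0\in\mathcal{E}\Big(\mathrm{cl}\Big(\bigcup_{(v,w)\in S}\big(w+D_\uparrow F((x,y);v)\big)\Big),P\Big)+P.$$ Then there exists $(v,w)\in S$ such that $-w\in DF_\uparrow((x,y);v)$.
   Context: $P\subset\mathbb{R}^p$ is a closed convex pointed cone containing $0$ with nonempty interior; $F_\uparrow(x)=F(x)+P$. $\mathcal{E}(S,P)=\{y\in S:(y-P)\cap S=\{y\}\}$; contingent cone $T_S(z)=\{v:\exists h_k\to0^+,\exists v_k\to v,z+h_kv_k\in S\}$; $\mathcal{PE}(S,P)=\{y\in\mathcal{E}(S,P):T_{S+P}(y)\cap(-P)=\{0\}\}$. $F$ is Lipschitz around $x$ if there are $l>0$ and a neighborhood $\mathcal{O}$ of $x$ with $F(x_1)\subset F(x_2)+l\|x_1-x_2\|\mathbf{B}$ for $x_1,x_2\in\mathcal{O}$. Contingent derivative $DF(x,y)$: graph $T_{\mathrm{gph}F}(x,y)$, value at $v$ written $DF((x,y);v)$. Generalized contingent epiderivative: $D_\uparrow F((x,y);v)=\mathcal{E}(DF_\uparrow((x,y);v),P)$ (empty if no minimal element exists). *)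

theory Defs
  imports "HOL-Analysis.Analysis"
begin

definition ordering_cone :: "'b::euclidean_space set \<Rightarrow> bool" where
  "ordering_cone P \<longleftrightarrow> closed P \<and> convex P \<and> cone P \<and> 0 \<in> P \<and>
     P \<inter> uminus ` P = {0} \<and> interior P \<noteq> {}"

definition setplus :: "'b::ab_group_add set \<Rightarrow> 'b set \<Rightarrow> 'b set" (infixl "\<oplus>s" 65) where
  "A \<oplus>s B = {a + b | a b. a \<in> A \<and> b \<in> B}"

definition upper :: "('a \<Rightarrow> 'b::ab_group_add set) \<Rightarrow> 'b set \<Rightarrow> 'a \<Rightarrow> 'b set" where
  "upper F P x = F x \<oplus>s P"

definition eff :: "'b::ab_group_add set \<Rightarrow> 'b set \<Rightarrow> 'b set" where
  "eff S P = {y \<in> S. {y - q | q. q \<in> P} \<inter> S = {y}}"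

definition contingent :: "'c::real_normed_vector set \<Rightarrow> 'c \<Rightarrow> 'c set" where
  "contingent S z = {v. \<exists>h u. (\<forall>k. h k > 0) \<and> h \<longlonglongrightarrow> 0 \<and> u \<longlonglongrightarrow> v \<and>
      (\<forall>k. z + h k *\<^sub>R u k \<in> S)}"

definition proper_eff :: "'b::euclidean_space set \<Rightarrow> 'b set \<Rightarrow> 'b set" where
  "proper_eff S P = {y \<in> eff S P. contingent (S \<oplus>s P) y \<inter> uminus ` P = {0}}"

definition gph :: "('a \<Rightarrow> 'b set) \<Rightarrow> ('a \<times> 'b) set" where
  "gph F = {(x, y). y \<in> F x}"

definition lipschitz_around :: "('a::real_normed_vector \<Rightarrow> 'b::real_normed_vector set) \<Rightarrow> 'a \<Rightarrow> bool" where
  "lipschitz_around F x \<longleftrightarrow> (\<exists>l>0. \<exists>U. open U \<and> x \<in> U \<and>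
     (\<forall>x1\<in>U. \<forall>x2\<in>U. F x1 \<subseteq> F x2 \<oplus>s cball 0 (l * norm (x1 - x2))))"

definition cder :: "('a::real_normed_vector \<Rightarrow> 'b::real_normed_vector set) \<Rightarrow> 'a \<times> 'b \<Rightarrow> 'a \<Rightarrow> 'b set" where
  "cder F xy v = {w. (v, w) \<in> contingent (gph F) xy}"

definition gen_epider :: "('a::real_normed_vector \<Rightarrow> 'b::euclidean_space set) \<Rightarrow> 'b set \<Rightarrow> 'a \<times> 'b \<Rightarrow> 'a \<Rightarrow> 'b set" where
  "gen_epider F P xy v = eff (cder (upper F P) xy v) P"

end

theory Submission
  imports Defs
begin

lemma cone_add_mem:
  assumes "convex P" "cone P" "a \<in> P" "b \<in> P"
  shows "a + b \<in> P"
proof -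
  have "(1/2) *\<^sub>R a + (1/2) *\<^sub>R b \<in> P"
    using assms by (intro convexD) auto
  then have "2 *\<^sub>R ((1/2) *\<^sub>R a + (1/2) *\<^sub>R b) \<in> P"
    using assms(2) unfolding cone_def by auto
  then show ?thesis by (simp add: scaleR_add_right)
qed

lemma contingent_iff:
  "v \<in> contingent S z \<longleftrightarrow>
    (\<forall>e>0. \<forall>d>0. \<exists>h u. 0 < h \<and> h < d \<and> dist u v < e \<and> z + h *\<^sub>R u \<in> S)"
proof
  assume "v \<in> contingent S z"
  then obtain h u where h: "\<forall>k. h k > 0" "h \<longlonglongrightarrow> 0" and u: "u \<longlonglongrightarrow> v"
    and m: "\<forall>k. z + h k *\<^sub>R u k \<in> S"
    unfolding contingent_def by blast
  show "\<forall>e>0. \<forall>d>0. \<exists>h u. 0 < h \<and> h < d \<and> dist u v < e \<and> z + h *\<^sub>R u \<in> S"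
  proof (intro allI impI)
    fix e d :: real assume e: "e > 0" and d: "d > 0"
    have "eventually (\<lambda>k. dist (h k) 0 < d) sequentially"
      using h(2) d by (rule tendstoD)
    moreover have "eventually (\<lambda>k. dist (u k) v < e) sequentially"
      using u e by (rule tendstoD)
    ultimately have "eventually (\<lambda>k. dist (h k) 0 < d \<and> dist (u k) v < e) sequentially"
      by (rule eventually_conj)
    then obtain k where "dist (h k) 0 < d" "dist (u k) v < e"
      unfolding eventually_sequentially by auto
    then show "\<exists>h u. 0 < h \<and> h < d \<and> dist u v < e \<and> z + h *\<^sub>R u \<in> S"
      using h(1) m by (intro exI[of _ "h k"] exI[of _ "u k"]) (auto simp: dist_real_def)
  qed
next
  assume A: "\<forall>e>0. \<forall>d>0. \<exists>h u. 0 < h \<and> h < d \<and> dist u v < e \<and> z + h *\<^sub>R u \<in> S"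
  have "\<forall>k::nat. \<exists>h u. 0 < h \<and> h < 1 / (real k + 1) \<and> dist u v < 1 / (real k + 1) \<and> z + h *\<^sub>R u \<in> S"
    using A by auto
  then obtain H U where HU: "\<And>k::nat. 0 < H k \<and> H k < 1 / (real k + 1) \<and> dist (U k) v < 1 / (real k + 1) \<and> z + H k *\<^sub>R U k \<in> S"
    by (metis (no_types))
  have lim: "\<exists>no. \<forall>n\<ge>no. 1 / (real n + 1) < r" if rpos: "r > 0" for r :: real
  proof -
    obtain n0 :: nat where "inverse (real (Suc n0)) < r" using reals_Archimedean[OF rpos] by auto
    then have "\<forall>n\<ge>n0. 1 / (real n + 1) < r"
      apply (intro allI impI)
      apply (rule le_less_trans[of _ "inverse (real (Suc n0))"])
      by (auto simp: field_simps)
    then show ?thesis by blast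
  qed
  have "H \<longlonglongrightarrow> 0"
    unfolding lim_sequentially
  proof (intro allI impI)
    fix r :: real assume "r > 0"
    then obtain no where "\<forall>n\<ge>no. 1 / (real n + 1) < r" using lim by blast
    show "\<exists>no. \<forall>n\<ge>no. dist (H n) 0 < r"
    proof (intro exI allI impI)
      fix n assume "n \<ge> no"
      then have "1 / (real n + 1) < r" using \<open>\<forall>n\<ge>no. 1 / (real n + 1) < r\<close> by blast
      then show "dist (H n) 0 < r" using HU[of n] by (simp add: dist_real_def)
    qed
  qed
  moreover have "U \<longlonglongrightarrow> v"
    unfolding lim_sequentially
  proof (intro allI impI)
    fix r :: real assume "r > 0"
    then obtain no where "\<forall>n\<ge>no. 1 / (real n + 1) < r" using lim by blast
    show "\<exists>no. \<forall>n\<ge>no. dist (U n) v < r"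
    proof (intro exI allI impI)
      fix n assume "n \<ge> no"
      then have "1 / (real n + 1) < r" using \<open>\<forall>n\<ge>no. 1 / (real n + 1) < r\<close> by blast
      then show "dist (U n) v < r" using HU[of n] by linarith
    qed
  qed
  ultimately show "v \<in> contingent S z"
    unfolding contingent_def using HU by blast
qed

lemma contingent_closed: "closed (contingent S z)"
proof -
  have "closure (contingent S z) \<subseteq> contingent S z"
  proof
    fix v assume "v \<in> closure (contingent S z)"
    then have C: "\<forall>e>0. \<exists>y\<in>contingent S z. dist y v < e"
      by (simp add: closure_approachable)
    show "v \<in> contingent S z"
      unfolding contingent_iff
    proof (intro allI impI)
      fix e d :: real assume e: "e > 0" and d: "d > 0"
      obtain y where y: "y \<in> contingent S z" "dist y v < e/2" using C e by (meson half_gt_zero)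
      obtain h u where "0 < h" "h < d" "dist u y < e/2" "z + h *\<^sub>R u \<in> S"
        using y(1) e d unfolding contingent_iff by (meson half_gt_zero)
      moreover have "dist u v < e" using dist_triangle[of u v y] \<open>dist u y < e/2\<close> y(2) by linarith
      ultimately show "\<exists>h u. 0 < h \<and> h < d \<and> dist u v < e \<and> z + h *\<^sub>R u \<in> S" by blast
    qed
  qed
  then show ?thesis using closure_subset_eq by blast
qed

lemma cder_upper_add:
  assumes "convex P" "cone P" "d \<in> cder (upper F P) xy v" "q \<in> P"
  shows "d + q \<in> cder (upper F P) xy v"
proof -
  obtain h u where h: "\<forall>k. h k > 0" "h \<longlonglongrightarrow> 0" and u: "u \<longlonglongrightarrow> (v, d)"
    and m: "\<forall>k. xy + h k *\<^sub>R u k \<in> gph (upper F P)"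
    using assms(3) unfolding cder_def contingent_def by blast
  define u' where "u' k = u k + (0, q)" for k
  have "u' \<longlonglongrightarrow> (v, d) + (0, q)" unfolding u'_def by (intro tendsto_add u tendsto_const)
  then have u': "u' \<longlonglongrightarrow> (v, d + q)" by simp
  have "xy + h k *\<^sub>R u' k \<in> gph (upper F P)" for k
  proof -
    have "snd (xy + h k *\<^sub>R u k) \<in> F (fst (xy + h k *\<^sub>R u k)) \<oplus>s P"
      using m[rule_format, of k] by (cases "xy + h k *\<^sub>R u k") (simp add: gph_def upper_def)
    then obtain a b where ab: "a \<in> F (fst (xy + h k *\<^sub>R u k))" "b \<in> P"
      "snd (xy + h k *\<^sub>R u k) = a + b"
      unfolding setplus_def by blast
    have hq: "h k *\<^sub>R q \<in> P" using assms(2,4) h(1) unfolding cone_def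
      by (meson less_imp_le)
    have bq: "b + h k *\<^sub>R q \<in> P" using cone_add_mem[OF assms(1,2) ab(2) hq] .
    have "snd (xy + h k *\<^sub>R u' k) = a + (b + h k *\<^sub>R q)"
      using ab(3) by (simp add: u'_def scaleR_add_right algebra_simps)
    moreover have "fst (xy + h k *\<^sub>R u' k) = fst (xy + h k *\<^sub>R u k)"
      by (simp add: u'_def scaleR_add_right)
    ultimately show ?thesis using ab(1) bq unfolding gph_def upper_def setplus_def
      by (cases "xy + h k *\<^sub>R u' k") auto
  qed
  then show ?thesis unfolding cder_def contingent_def using h u' by blast
qed

theorem proposition6p9:
  fixes F :: "'a::real_normed_vector \<Rightarrow> 'b::euclidean_space set"
    and P :: "'b set" and x :: 'a and y :: 'b and S :: "('a \<times> 'b) set"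
  assumes "ordering_cone P"
    and "(x, y) \<in> gph F"
    and "lipschitz_around F x"
    and "y \<in> proper_eff (F x) P"
    and "compact S" and "S \<noteq> {}"
    and "0 \<in> eff (closure (\<Union>(v, w)\<in>S. {w} \<oplus>s gen_epider F P (x, y) v)) P \<oplus>s P"
  shows "\<exists>(v, w)\<in>S. - w \<in> cder (upper F P) (x, y) v"
proof -
  let ?U = "\<Union>(v, w)\<in>S. {w} \<oplus>s gen_epider F P (x, y) v"
  have cvx: "convex P" and cn: "cone P" using assms(1) unfolding ordering_cone_def by auto
  obtain e p where ep: "e \<in> closure ?U" "p \<in> P" "0 = e + p"
    using assms(7) unfolding setplus_def eff_def by auto
  obtain f where f: "\<forall>n. f n \<in> ?U" "f \<longlonglongrightarrow> e"
    using ep(1) closure_sequential by blast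
  have "\<forall>n. \<exists>vw d. vw \<in> S \<and> d \<in> cder (upper F P) (x, y) (fst vw) \<and> f n = snd vw + d"
  proof
    fix n
    from f(1) obtain v w where "(v, w) \<in> S" "f n \<in> {w} \<oplus>s gen_epider F P (x, y) v" by blast
    then show "\<exists>vw d. vw \<in> S \<and> d \<in> cder (upper F P) (x, y) (fst vw) \<and> f n = snd vw + d"
      unfolding setplus_def gen_epider_def eff_def by (intro exI[of _ "(v,w)"]) auto
  qed
  then obtain VW D where VW: "\<And>n. VW n \<in> S" "\<And>n. D n \<in> cder (upper F P) (x, y) (fst (VW n))"
    "\<And>n. f n = snd (VW n) + D n" by metis
  obtain l r where l: "l \<in> S" "strict_mono r" "(VW \<circ> r) \<longlonglongrightarrow> l"
    using seq_compactE[OF compact_imp_seq_compact[OF assms(5)]] VW(1) by metis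
  obtain v w where lvw: "l = (v, w)" by fastforce
  have fr: "(f \<circ> r) \<longlonglongrightarrow> e" using f(2) l(2) by (rule LIMSEQ_subseq_LIMSEQ)
  have "(\<lambda>n. (fst ((VW \<circ> r) n), (f \<circ> r) n - snd ((VW \<circ> r) n))) \<longlonglongrightarrow> (fst l, e - snd l)"
    by (intro tendsto_intros l(3) fr)
  then have lim: "(\<lambda>n. (fst (VW (r n)), D (r n))) \<longlonglongrightarrow> (v, e - w)"
    using VW(3) lvw by (simp add: o_def)
  have "\<forall>n. (fst (VW (r n)), D (r n)) \<in> contingent (gph (upper F P)) (x, y)"
    using VW(2) unfolding cder_def by auto
  then have "(v, e - w) \<in> contingent (gph (upper F P)) (x, y)"
    using closed_sequentially[OF contingent_closed _ lim] by blast
  then have "e - w \<in> cder (upper F P) (x, y) v" unfolding cder_def by simp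
  then have "e - w + p \<in> cder (upper F P) (x, y) v"
    using cder_upper_add[OF cvx cn _ ep(2)] by blast
  moreover have "e - w + p = - w" using ep(3) by (simp add: algebra_simps)
  ultimately show ?thesis using l(1) lvw by auto
qed

end
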